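(* Let $I$ be a set, $\theta$ an infinite cardinal, $\mu$ a cardinal and $\varepsilon$ an ordinal with $\mu=\mu^{<\theta}>\varepsilon$ or $\theta>\varepsilon$. Let $D$ be a $\theta$-complete $(\mu,\theta)$-regular filter on $I$ (i.e. on the Boolean algebra $\mathscr P(I)$), let $T$ be an $\mathbb L_{\theta,\theta}(\tau)$-theory and $\Delta$ a set of conjunctions of fewer than $\theta$ atomic formulas of $\mathbb L_{\theta,\theta}(\tau)$. Then the following are equivalent: (B) $D$ is a $(\mu,\theta,\varepsilon!,\Delta,T)$-moral filter on $\mathscr P(I)$; (C) for every sequence $\langle M_s:s\in I\rangle$ of models of $T$, the reduced product $\prod_{s\in I}M_s/D$ is $(\mu^+,\theta,\varepsilon!,\Delta)$-saturated.
   Context: $D$ is $(\mu,\theta)$-regular if there are $w_s\in[\mu]^{<\theta}$ ($s\in I$) with $\{s\in I:\alpha\in w_s\}\in D$ for every $\alpha<\mu$. $\bar x_{[\varepsilon]}=\langle x_\zeta:\zeta<\varepsilon\rangle$; formulas of $\Delta$ are regarded as $\varphi(\bar x_{[\varepsilon]},\bar y)$ (dummy variables allowed). Moral filter: for a filter $D$ on a complete Boolean algebra $\mathfrak B$, a $D$-$(\mu,\theta,\varepsilon!,\Delta,T)$-problem is $\bar{\mathbf a}=\langle\mathbf a_u:u\in[\mu]^{<\theta}\rangle$ with $\mathbf a_u\in D$, $u\subseteq v\Rightarrow\mathbf a_v\le\mathbf a_u$, $\mathbf a_\emptyset=1$, such that for some sequence $\langle\varphi_\alpha(\bar x_{[\varepsilon]},\bar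 y_\alpha):\alpha<\mu\rangle$ of formulas from $\Delta$, for every nonzero $\mathbf a\in\mathfrak B$ and every $u\in[\mu]^{<\theta}$ there are $M\models T$ and tuples $\bar b_\alpha$ ($\alpha\in u$) in $M$ such that for every $v\subseteq u$: if $\mathbf a\le\mathbf a_v$ then $M\models\exists\bar x_{[\varepsilon]}\bigwedge_{\alpha\in v}\varphi_\alpha(\bar x_{[\varepsilon]},\bar b_\alpha)$, and if $\mathbf a\le 1-\mathbf a_v$ then $M\models\neg\exists\bar x_{[\varepsilon]}\bigwedge_{\alpha\in v}\varphi_\alpha(\bar x_{[\varepsilon]},\bar b_\alpha)$. A solution is $\bar{\mathbf b}=\langle\mathbf b_u:u\in[\mu]^{<\theta}\rangle$ with $\mathbf b_u\in D$, $\mathbf b_\emptyset=1$, $\mathbf b_u\le\mathbf a_u$, and $\mathbf b_u=\bigcap_{\alpha\in u}\mathbf b_{\{\alpha\}}$. $D$ is $(\mu,\theta,\varepsilon!,\Delta,T)$-moral if every such problem has a solution. A structure $N$ is $(\lambda,\theta,\varepsilon!,\Delta)$-saturated if every set $p$ of fewer than $\lambda$ formulas $\varphi(\bar x_{[\varepsilon]},\bar a)$ with $\varphi\in\Delta$, $\bar a$ from $N$, such that every subset of $p$ of size $<\theta$ is realized in $N$, is realized in $N$. *)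

theory Defs
  imports Main "HOL-Library.FuncSet"
begin

unbundle cardinal_syntax

text \<open>Vocabulary tau: function symbols of type 'f, relation symbols of type 'r
  (each applied to a finite list of arguments).\<close>

datatype ('f, 'v) trm = Var 'v | App 'f "('f, 'v) trm list"

datatype ('r, 'f, 'v) atm = Eq "('f, 'v) trm" "('f, 'v) trm" | Rel 'r "('f, 'v) trm list"

datatype ('r, 'f, 'v, 'k) fm =
    Atom "('r, 'f, 'v) atm"
  | Neg "('r, 'f, 'v, 'k) fm"
  | Conj "'k set" "'k \<Rightarrow> ('r, 'f, 'v, 'k) fm"
  | Ex "'v set" "('r, 'f, 'v, 'k) fm"

fun trm_vars :: "('f, 'v) trm \<Rightarrow> 'v set" where
  "trm_vars (Var v) = {v}"
| "trm_vars (App f ts) = (\<Union>t\<in>set ts. trm_vars t)"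

fun atm_vars :: "('r, 'f, 'v) atm \<Rightarrow> 'v set" where
  "atm_vars (Eq t u) = trm_vars t \<union> trm_vars u"
| "atm_vars (Rel r ts) = (\<Union>t\<in>set ts. trm_vars t)"

primrec fv :: "('r, 'f, 'v, 'k) fm \<Rightarrow> 'v set" where
  "fv (Atom a) = atm_vars a"
| "fv (Neg \<phi>) = fv \<phi>"
| "fv (Conj K g) = (\<Union>k\<in>K. fv (g k))"
| "fv (Ex V \<phi>) = fv \<phi> - V"

text \<open>Formulas of L_{theta,theta}: conjunctions of fewer than theta formulas,
  existential quantification over fewer than theta variables.\<close>
primrec fm_wf :: "'th set \<Rightarrow> ('r, 'f, 'v, 'k) fm \<Rightarrow> bool" where
  "fm_wf \<Theta> (Atom a) = True"
| "fm_wf \<Theta> (Neg \<phi>) = fm_wf \<Theta> \<phi>"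
| "fm_wf \<Theta> (Conj K g) = ( |K| <o |\<Theta>| \<and> (\<forall>k\<in>K. fm_wf \<Theta> (g k)))"
| "fm_wf \<Theta> (Ex V \<phi>) = ( |V| <o |\<Theta>| \<and> fm_wf \<Theta> \<phi>)"

definition atomic_conj :: "'th set \<Rightarrow> ('r, 'f, 'v, 'k) fm \<Rightarrow> bool" where
  "atomic_conj \<Theta> \<phi> \<longleftrightarrow>
     (\<exists>K g. \<phi> = Conj K g \<and> |K| <o |\<Theta>| \<and> (\<forall>k\<in>K. \<exists>a. g k = Atom a))"

record ('m, 'f, 'r) struc =
  carrier :: "'m set"
  fn :: "'f \<Rightarrow> 'm list \<Rightarrow> 'm"
  rel :: "'r \<Rightarrow> 'm list \<Rightarrow> bool"

definition struc_ok :: "('m, 'f, 'r) struc \<Rightarrow> bool" where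
  "struc_ok M \<longleftrightarrow> carrier M \<noteq> {} \<and>
     (\<forall>f xs. set xs \<subseteq> carrier M \<longrightarrow> fn M f xs \<in> carrier M)"

fun eval :: "('m, 'f, 'r) struc \<Rightarrow> ('v \<Rightarrow> 'm) \<Rightarrow> ('f, 'v) trm \<Rightarrow> 'm" where
  "eval M \<sigma> (Var v) = \<sigma> v"
| "eval M \<sigma> (App f ts) = fn M f (map (eval M \<sigma>) ts)"

fun sat_atm :: "('m, 'f, 'r) struc \<Rightarrow> ('v \<Rightarrow> 'm) \<Rightarrow> ('r, 'f, 'v) atm \<Rightarrow> bool" where
  "sat_atm M \<sigma> (Eq t u) = (eval M \<sigma> t = eval M \<sigma> u)"
| "sat_atm M \<sigma> (Rel r ts) = rel M r (map (eval M \<sigma>) ts)"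

definition upd :: "'v set \<Rightarrow> ('v \<Rightarrow> 'm) \<Rightarrow> ('v \<Rightarrow> 'm) \<Rightarrow> 'v \<Rightarrow> 'm" where
  "upd V g \<sigma> = (\<lambda>v. if v \<in> V then g v else \<sigma> v)"

primrec sat :: "('r, 'f, 'v, 'k) fm \<Rightarrow> ('m, 'f, 'r) struc \<Rightarrow> ('v \<Rightarrow> 'm) \<Rightarrow> bool" where
  "sat (Atom a) M \<sigma> = sat_atm M \<sigma> a"
| "sat (Neg \<phi>) M \<sigma> = (\<not> sat \<phi> M \<sigma>)"
| "sat (Conj K g) M \<sigma> = (\<forall>k\<in>K. sat (g k) M \<sigma>)"
| "sat (Ex V \<phi>) M \<sigma> = (\<exists>g. (\<forall>v\<in>V. g v \<in> carrier M) \<and> sat \<phi> M (upd V g \<sigma>))"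

definition is_model :: "('m, 'f, 'r) struc \<Rightarrow> ('r, 'f, 'v, 'k) fm set \<Rightarrow> bool" where
  "is_model M T \<longleftrightarrow> struc_ok M \<and>
     (\<forall>\<phi>\<in>T. \<forall>\<sigma>. (\<forall>v. \<sigma> v \<in> carrier M) \<longrightarrow> sat \<phi> M \<sigma>)"

definition is_theory :: "'th set \<Rightarrow> ('r, 'f, 'v, 'k) fm set \<Rightarrow> bool" where
  "is_theory \<Theta> T \<longleftrightarrow> (\<forall>\<phi>\<in>T. fm_wf \<Theta> \<phi> \<and> fv \<phi> = {})"

definition proper_filter :: "'i set \<Rightarrow> 'i set set \<Rightarrow> bool" where
  "proper_filter I D \<longleftrightarrow> D \<subseteq> Pow I \<and> I \<in> D \<and> {} \<notin> D \<and>
     (\<forall>A B. A \<in> D \<longrightarrow> B \<in> D \<longrightarrow> A \<inter> B \<in> D) \<and>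
     (\<forall>A B. A \<in> D \<longrightarrow> A \<subseteq> B \<longrightarrow> B \<subseteq> I \<longrightarrow> B \<in> D)"

definition theta_complete :: "'th set \<Rightarrow> 'i set \<Rightarrow> 'i set set \<Rightarrow> bool" where
  "theta_complete \<Theta> I D \<longleftrightarrow> (\<forall>A. A \<subseteq> D \<longrightarrow> |A| <o |\<Theta>| \<longrightarrow> I \<inter> \<Inter>A \<in> D)"

definition regular_filter :: "'c set \<Rightarrow> 'th set \<Rightarrow> 'i set \<Rightarrow> 'i set set \<Rightarrow> bool" where
  "regular_filter Mu \<Theta> I D \<longleftrightarrow>
     (\<exists>w. (\<forall>s\<in>I. w s \<subseteq> Mu \<and> |w s| <o |\<Theta>| ) \<and>
          (\<forall>\<alpha>\<in>Mu. {s\<in>I. \<alpha> \<in> w s} \<in> D))"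

text \<open>mu = mu^{<theta}: mu^kappa \<le> mu for all cardinals kappa < theta
  (the reverse inequality is automatic as theta > 1).\<close>
definition cexp_lt_fixed :: "'c set \<Rightarrow> 'th set \<Rightarrow> bool" where
  "cexp_lt_fixed Mu \<Theta> \<longleftrightarrow>
     (\<forall>K. K \<subseteq> \<Theta> \<longrightarrow> |K| <o |\<Theta>| \<longrightarrow> |K \<rightarrow>\<^sub>E Mu| \<le>o |Mu| ) \<and> Mu \<noteq> {}"

definition solvable ::
  "('m, 'f, 'r) struc \<Rightarrow> 'v set \<Rightarrow> ('c \<Rightarrow> ('r, 'f, 'v, 'k) fm) \<Rightarrow> ('c \<Rightarrow> 'v \<Rightarrow> 'm) \<Rightarrow> 'c set \<Rightarrow> bool" where
  "solvable M E \<phi> b v \<longleftrightarrow>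
     (\<exists>g. (\<forall>x\<in>E. g x \<in> carrier M) \<and> (\<forall>\<alpha>\<in>v. sat (\<phi> \<alpha>) M (upd E g (b \<alpha>))))"

definition small_subsets :: "'c set \<Rightarrow> 'th set \<Rightarrow> 'c set set" where
  "small_subsets Mu \<Theta> = {u. u \<subseteq> Mu \<and> |u| <o |\<Theta>|}"

definition moral_problem ::
  "'i set \<Rightarrow> 'i set set \<Rightarrow> 'c set \<Rightarrow> 'th set \<Rightarrow> 'v set \<Rightarrow> ('r, 'f, 'v, 'k) fm set
   \<Rightarrow> ('r, 'f, 'v, 'k) fm set \<Rightarrow> ('c set \<Rightarrow> 'i set) \<Rightarrow> 'm itself \<Rightarrow> bool" where
  "moral_problem I D Mu \<Theta> E \<Delta> T a (_ :: 'm itself) \<longleftrightarrow>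
     (\<forall>u\<in>small_subsets Mu \<Theta>. a u \<in> D) \<and>
     (\<forall>u\<in>small_subsets Mu \<Theta>. \<forall>v\<in>small_subsets Mu \<Theta>. u \<subseteq> v \<longrightarrow> a v \<subseteq> a u) \<and>
     a {} = I \<and>
     (\<exists>\<phi>. (\<forall>\<alpha>\<in>Mu. \<phi> \<alpha> \<in> \<Delta>) \<and>
        (\<forall>A u. A \<subseteq> I \<longrightarrow> A \<noteq> {} \<longrightarrow> u \<in> small_subsets Mu \<Theta> \<longrightarrow>
           (\<exists>(M :: ('m, 'f, 'r) struc) b. is_model M T \<and>
              (\<forall>\<alpha>\<in>u. \<forall>y. y \<notin> E \<longrightarrow> b \<alpha> y \<in> carrier M) \<and>
              (\<forall>v. v \<subseteq> u \<longrightarrow>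
                 (A \<subseteq> a v \<longrightarrow> solvable M E \<phi> b v) \<and>
                 (A \<subseteq> I - a v \<longrightarrow> \<not> solvable M E \<phi> b v)))))"

definition moral_solution ::
  "'i set \<Rightarrow> 'i set set \<Rightarrow> 'c set \<Rightarrow> 'th set \<Rightarrow> ('c set \<Rightarrow> 'i set) \<Rightarrow> ('c set \<Rightarrow> 'i set) \<Rightarrow> bool" where
  "moral_solution I D Mu \<Theta> a b \<longleftrightarrow>
     (\<forall>u\<in>small_subsets Mu \<Theta>. b u \<in> D \<and> b u \<subseteq> a u \<and> b u = I \<inter> (\<Inter>\<alpha>\<in>u. b {\<alpha>})) \<and>
     b {} = I"

definition moral_filter ::
  "'i set \<Rightarrow> 'i set set \<Rightarrow> 'c set \<Rightarrow> 'th set \<Rightarrow> 'v set \<Rightarrow> ('r, 'f, 'v, 'k) fm set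
   \<Rightarrow> ('r, 'f, 'v, 'k) fm set \<Rightarrow> 'm itself \<Rightarrow> bool" where
  "moral_filter I D Mu \<Theta> E \<Delta> T TYPE_M \<longleftrightarrow>
     (\<forall>a. moral_problem I D Mu \<Theta> E \<Delta> T a TYPE_M \<longrightarrow> (\<exists>b. moral_solution I D Mu \<Theta> a b))"

text \<open>(lambda, theta, epsilon!, Delta)-saturation; lambda given as a cardinal
  (a well-order relation); a type p is a set of pairs (phi, parameters).\<close>
definition realized ::
  "('n, 'f, 'r) struc \<Rightarrow> 'v set \<Rightarrow> (('r, 'f, 'v, 'k) fm \<times> ('v \<Rightarrow> 'n)) set \<Rightarrow> bool" where
  "realized N E p \<longleftrightarrow>
     (\<exists>g. (\<forall>x\<in>E. g x \<in> carrier N) \<and> (\<forall>(\<phi>, c)\<in>p. sat \<phi> N (upd E g c)))"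

definition saturated ::
  "'l rel \<Rightarrow> 'th set \<Rightarrow> 'v set \<Rightarrow> ('r, 'f, 'v, 'k) fm set \<Rightarrow> ('n, 'f, 'r) struc \<Rightarrow> bool" where
  "saturated \<Lambda> \<Theta> E \<Delta> N \<longleftrightarrow>
     (\<forall>p. |p| <o \<Lambda> \<longrightarrow>
        (\<forall>(\<phi>, c)\<in>p. \<phi> \<in> \<Delta> \<and> (\<forall>y. y \<notin> E \<longrightarrow> c y \<in> carrier N)) \<longrightarrow>
        (\<forall>q. q \<subseteq> p \<longrightarrow> |q| <o |\<Theta>| \<longrightarrow> realized N E q) \<longrightarrow>
        realized N E p)"

definition red_class :: "'i set \<Rightarrow> 'i set set \<Rightarrow> ('i \<Rightarrow> ('m, 'f, 'r) struc) \<Rightarrow> ('i \<Rightarrow> 'm) \<Rightarrow> ('i \<Rightarrow> 'm) set" where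
  "red_class I D M g = {h \<in> Pi I (\<lambda>s. carrier (M s)). {s\<in>I. g s = h s} \<in> D}"

definition red_rep :: "('i \<Rightarrow> 'm) set \<Rightarrow> 'i \<Rightarrow> 'm" where
  "red_rep c = (SOME g. g \<in> c)"

definition reduced_product :: "'i set \<Rightarrow> 'i set set \<Rightarrow> ('i \<Rightarrow> ('m, 'f, 'r) struc) \<Rightarrow> (('i \<Rightarrow> 'm) set, 'f, 'r) struc" where
  "reduced_product I D M =
     \<lparr> carrier = red_class I D M ` Pi I (\<lambda>s. carrier (M s)),
       fn = (\<lambda>f cs. red_class I D M (\<lambda>s. fn (M s) f (map (\<lambda>c. red_rep c s) cs))),
       rel = (\<lambda>r cs. {s\<in>I. rel (M s) r (map (\<lambda>c. red_rep c s) cs)} \<in> D) \<rparr>"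

end

theory Submission
  imports Defs
begin


lemma fin_less_inf: "finite (A::'a set) \<Longrightarrow> infinite (B::'b set) \<Longrightarrow> |A| <o |B|"
  by (metis Field_card_of card_of_Well_order finite_ordLess_infinite)

lemma pf_int: "proper_filter I D \<Longrightarrow> A \<in> D \<Longrightarrow> B \<in> D \<Longrightarrow> A \<inter> B \<in> D"
  by (simp add: proper_filter_def)
lemma pf_up: "proper_filter I D \<Longrightarrow> A \<in> D \<Longrightarrow> A \<subseteq> B \<Longrightarrow> B \<subseteq> I \<Longrightarrow> B \<in> D"
  by (simp add: proper_filter_def)
lemma pf_I: "proper_filter I D \<Longrightarrow> I \<in> D"
  by (simp add: proper_filter_def)
lemma pf_sub: "proper_filter I D \<Longrightarrow> A \<in> D \<Longrightarrow> A \<subseteq> I"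
  by (auto simp add: proper_filter_def)

lemma pf_agree:
  assumes pf: "proper_filter I D" and Z: "Z \<in> D" and ag: "\<forall>s\<in>Z. (s \<in> X \<longleftrightarrow> s \<in> Y)"
    and "X \<subseteq> I" "Y \<subseteq> I"
  shows "X \<in> D \<longleftrightarrow> Y \<in> D"
proof
  assume "X \<in> D"
  then have "X \<inter> Z \<in> D" using pf_int[OF pf _ Z] by blast
  moreover have "X \<inter> Z \<subseteq> Y" using ag by blast
  ultimately show "Y \<in> D" using pf_up[OF pf] assms(5) by blast
next
  assume "Y \<in> D"
  then have "Y \<inter> Z \<in> D" using pf_int[OF pf _ Z] by blast
  moreover have "Y \<inter> Z \<subseteq> X" using ag by blast
  ultimately show "X \<in> D" using pf_up[OF pf] assms(4) by blast
qed

lemma pf_list: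
  assumes pf: "proper_filter I D"
  shows "(\<forall>t\<in>set ts. {s\<in>I. P t s} \<in> D) \<Longrightarrow> {s\<in>I. \<forall>t\<in>set ts. P t s} \<in> D"
proof (induction ts)
  case Nil then show ?case using pf_I[OF pf] by simp
next
  case (Cons a ts)
  have "{s\<in>I. \<forall>t\<in>set (a#ts). P t s} = {s\<in>I. P a s} \<inter> {s\<in>I. \<forall>t\<in>set ts. P t s}" by auto
  then show ?case using Cons pf_int[OF pf] by simp
qed

lemma rc_eq:
  assumes pf: "proper_filter I D" and g: "g \<in> Pi I (\<lambda>s. carrier (M s))"
    and h: "h \<in> Pi I (\<lambda>s. carrier (M s))"
  shows "red_class I D M g = red_class I D M h \<longleftrightarrow> {s\<in>I. g s = h s} \<in> D"
proof
  assume eq: "red_class I D M g = red_class I D M h"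
  have "g \<in> red_class I D M g" using g pf_I[OF pf] by (simp add: red_class_def)
  hence "g \<in> red_class I D M h" using eq by simp
  hence "{s\<in>I. h s = g s} \<in> D" by (simp add: red_class_def)
  moreover have "{s\<in>I. h s = g s} = {s\<in>I. g s = h s}" by auto
  ultimately show "{s\<in>I. g s = h s} \<in> D" by simp
next
  assume H: "{s\<in>I. g s = h s} \<in> D"
  show "red_class I D M g = red_class I D M h"
  proof (rule set_eqI)
    fix k
    show "k \<in> red_class I D M g \<longleftrightarrow> k \<in> red_class I D M h"
    proof
      assume "k \<in> red_class I D M g"
      hence k: "k \<in> Pi I (\<lambda>s. carrier (M s))" and K: "{s\<in>I. g s = k s} \<in> D"
        by (simp_all add: red_class_def)
      have "{s\<in>I. g s = h s} \<inter> {s\<in>I. g s = k s} \<subseteq> {s\<in>I. h s = k s}" by auto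
      then have "{s\<in>I. h s = k s} \<in> D" using pf_up[OF pf pf_int[OF pf H K]] by auto
      thus "k \<in> red_class I D M h" using k by (simp add: red_class_def)
    next
      assume "k \<in> red_class I D M h"
      hence k: "k \<in> Pi I (\<lambda>s. carrier (M s))" and K: "{s\<in>I. h s = k s} \<in> D"
        by (simp_all add: red_class_def)
      have "{s\<in>I. g s = h s} \<inter> {s\<in>I. h s = k s} \<subseteq> {s\<in>I. g s = k s}" by auto
      then have "{s\<in>I. g s = k s} \<in> D" using pf_up[OF pf pf_int[OF pf H K]] by auto
      thus "k \<in> red_class I D M g" using k by (simp add: red_class_def)
    qed
  qed
qed

lemma rp_simps:
  "carrier (reduced_product I D M) = red_class I D M ` Pi I (\<lambda>s. carrier (M s))"
  "fn (reduced_product I D M) f cs = red_class I D M (\<lambda>s. fn (M s) f (map (\<lambda>c. red_rep c s) cs))"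
  "rel (reduced_product I D M) r cs = ({s\<in>I. rel (M s) r (map (\<lambda>c. red_rep c s) cs)} \<in> D)"
  by (simp_all add: reduced_product_def)

lemma rep_props:
  assumes pf: "proper_filter I D" and g: "g \<in> Pi I (\<lambda>s. carrier (M s))"
  shows "red_rep (red_class I D M g) \<in> Pi I (\<lambda>s. carrier (M s))"
    and "red_class I D M (red_rep (red_class I D M g)) = red_class I D M g"
    and "{s\<in>I. red_rep (red_class I D M g) s = g s} \<in> D"
proof -
  have "g \<in> red_class I D M g" using g pf_I[OF pf] by (simp add: red_class_def)
  then have r: "red_rep (red_class I D M g) \<in> red_class I D M g"
    unfolding red_rep_def by (rule someI[where x=g])
  then show r1: "red_rep (red_class I D M g) \<in> Pi I (\<lambda>s. carrier (M s))"
    by (simp add: red_class_def)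
  have r2: "{s\<in>I. g s = red_rep (red_class I D M g) s} \<in> D" using r by (simp add: red_class_def)
  then show "red_class I D M (red_rep (red_class I D M g)) = red_class I D M g"
    using rc_eq[OF pf r1 g] rc_eq[OF pf g r1] by simp
  have "{s\<in>I. g s = red_rep (red_class I D M g) s} = {s\<in>I. red_rep (red_class I D M g) s = g s}" by auto
  then show "{s\<in>I. red_rep (red_class I D M g) s = g s} \<in> D" using r2 by simp
qed

lemma rep_carrier:
  assumes pf: "proper_filter I D" and c: "c \<in> carrier (reduced_product I D M)"
  shows "red_rep c \<in> Pi I (\<lambda>s. carrier (M s))" and "red_class I D M (red_rep c) = c"
proof -
  obtain g where g: "g \<in> Pi I (\<lambda>s. carrier (M s))" and cg: "c = red_class I D M g"
    using c by (auto simp: rp_simps)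
  show "red_rep c \<in> Pi I (\<lambda>s. carrier (M s))" using rep_props(1)[OF pf g] cg by simp
  show "red_class I D M (red_rep c) = c" using rep_props(2)[OF pf g] cg by simp
qed

lemma los_eval:
  assumes pf: "proper_filter I D" and ok: "\<forall>s\<in>I. struc_ok (M s)"
    and rho: "\<forall>v. (\<lambda>s. \<rho> s v) \<in> Pi I (\<lambda>s. carrier (M s))"
    and sig: "\<forall>v. \<sigma> v = red_class I D M (\<lambda>s. \<rho> s v)"
  shows "(\<lambda>s. eval (M s) (\<rho> s) t) \<in> Pi I (\<lambda>s. carrier (M s)) \<and>
         eval (reduced_product I D M) \<sigma> t = red_class I D M (\<lambda>s. eval (M s) (\<rho> s) t)"
proof (induction t)
  case (Var v) then show ?case using rho sig by simp
next
  case (App f ts)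
  let ?P = "reduced_product I D M"
  let ?h = "\<lambda>t s. eval (M s) (\<rho> s) t"
  have IH: "\<forall>t\<in>set ts. ?h t \<in> Pi I (\<lambda>s. carrier (M s)) \<and> eval ?P \<sigma> t = red_class I D M (?h t)"
    using App by blast
  have pi: "(\<lambda>s. eval (M s) (\<rho> s) (App f ts)) \<in> Pi I (\<lambda>s. carrier (M s))"
  proof
    fix s assume s: "s \<in> I"
    have "set (map (eval (M s) (\<rho> s)) ts) \<subseteq> carrier (M s)"
      using IH s by (auto simp: Pi_def)
    then show "eval (M s) (\<rho> s) (App f ts) \<in> carrier (M s)"
      using ok s unfolding struc_ok_def by auto
  qed
  let ?F1 = "\<lambda>s. fn (M s) f (map (\<lambda>c. red_rep c s) (map (eval ?P \<sigma>) ts))"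
  let ?F2 = "\<lambda>s. eval (M s) (\<rho> s) (App f ts)"
  have R: "{s\<in>I. red_rep (eval ?P \<sigma> t) s = ?h t s} \<in> D" if t: "t \<in> set ts" for t
  proof -
    have "?h t \<in> Pi I (\<lambda>s. carrier (M s))" and "eval ?P \<sigma> t = red_class I D M (?h t)"
      using IH t by auto
    then show ?thesis using rep_props(3)[OF pf, of "?h t" M] by simp
  qed
  have Z: "{s\<in>I. \<forall>t\<in>set ts. red_rep (eval ?P \<sigma> t) s = ?h t s} \<in> D"
    using R by (intro pf_list[OF pf]) auto
  have F1: "?F1 \<in> Pi I (\<lambda>s. carrier (M s))"
  proof
    fix s assume s: "s \<in> I"
    have "red_rep (eval ?P \<sigma> t) s \<in> carrier (M s)" if t: "t \<in> set ts" for t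
    proof -
      have "?h t \<in> Pi I (\<lambda>s. carrier (M s))" and "eval ?P \<sigma> t = red_class I D M (?h t)"
        using IH t by auto
      then show ?thesis using rep_props(1)[OF pf, of "?h t" M] s by auto
    qed
    then have "set (map (\<lambda>c. red_rep c s) (map (eval ?P \<sigma>) ts)) \<subseteq> carrier (M s)" by auto
    then show "?F1 s \<in> carrier (M s)" using ok s unfolding struc_ok_def by blast
  qed
  have "{s\<in>I. \<forall>t\<in>set ts. red_rep (eval ?P \<sigma> t) s = ?h t s} \<subseteq> {s\<in>I. ?F1 s = ?F2 s}"
  proof
    fix s assume "s \<in> {s\<in>I. \<forall>t\<in>set ts. red_rep (eval ?P \<sigma> t) s = ?h t s}"
    then have s: "s \<in> I" and A: "\<forall>t\<in>set ts. red_rep (eval ?P \<sigma> t) s = ?h t s" by auto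
    have "map (\<lambda>c. red_rep c s) (map (eval ?P \<sigma>) ts) = map (eval (M s) (\<rho> s)) ts"
      using A by (induction ts) auto
    then show "s \<in> {s\<in>I. ?F1 s = ?F2 s}" using s by (simp del: map_map)
  qed
  then have "{s\<in>I. ?F1 s = ?F2 s} \<in> D" using pf_up[OF pf Z] by blast
  then have "red_class I D M ?F1 = red_class I D M ?F2" using rc_eq[OF pf F1 pi] by simp
  moreover have "eval ?P \<sigma> (App f ts) = red_class I D M ?F1" by (simp add: rp_simps)
  ultimately show ?case using pi by simp
qed

lemma los_atm:
  assumes pf: "proper_filter I D" and ok: "\<forall>s\<in>I. struc_ok (M s)"
    and rho: "\<forall>v. (\<lambda>s. \<rho> s v) \<in> Pi I (\<lambda>s. carrier (M s))"
    and sig: "\<forall>v. \<sigma> v = red_class I D M (\<lambda>s. \<rho> s v)"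
  shows "sat_atm (reduced_product I D M) \<sigma> a \<longleftrightarrow> {s\<in>I. sat_atm (M s) (\<rho> s) a} \<in> D"
proof (cases a)
  case (Eq t u)
  note E = los_eval[OF pf ok rho sig]
  have t1: "(\<lambda>s. eval (M s) (\<rho> s) t) \<in> Pi I (\<lambda>s. carrier (M s))"
    and t2: "eval (reduced_product I D M) \<sigma> t = red_class I D M (\<lambda>s. eval (M s) (\<rho> s) t)"
    using E[of t] by blast+
  have u1: "(\<lambda>s. eval (M s) (\<rho> s) u) \<in> Pi I (\<lambda>s. carrier (M s))"
    and u2: "eval (reduced_product I D M) \<sigma> u = red_class I D M (\<lambda>s. eval (M s) (\<rho> s) u)"
    using E[of u] by blast+
  have "sat_atm (reduced_product I D M) \<sigma> a \<longleftrightarrow>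
     red_class I D M (\<lambda>s. eval (M s) (\<rho> s) t) = red_class I D M (\<lambda>s. eval (M s) (\<rho> s) u)"
    using Eq t2 u2 by simp
  also have "\<dots> \<longleftrightarrow> {s\<in>I. eval (M s) (\<rho> s) t = eval (M s) (\<rho> s) u} \<in> D"
    by (rule rc_eq[OF pf t1 u1])
  finally show ?thesis using Eq by simp
next
  case (Rel r ts)
  let ?P = "reduced_product I D M"
  let ?h = "\<lambda>t s. eval (M s) (\<rho> s) t"
  note E = los_eval[OF pf ok rho sig]
  have R: "{s\<in>I. red_rep (eval ?P \<sigma> t) s = ?h t s} \<in> D" for t
  proof -
    have "?h t \<in> Pi I (\<lambda>s. carrier (M s))" and "eval ?P \<sigma> t = red_class I D M (?h t)"
      using E[of t] by auto
    then show ?thesis using rep_props(3)[OF pf, of "?h t" M] by simp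
  qed
  have Z: "{s\<in>I. \<forall>t\<in>set ts. red_rep (eval ?P \<sigma> t) s = ?h t s} \<in> D"
    using R by (intro pf_list[OF pf]) auto
  have "{s\<in>I. rel (M s) r (map (\<lambda>c. red_rep c s) (map (eval ?P \<sigma>) ts))} \<in> D
     \<longleftrightarrow> {s\<in>I. rel (M s) r (map (eval (M s) (\<rho> s)) ts)} \<in> D"
  proof (rule pf_agree[OF pf Z])
    show "\<forall>s\<in>{s\<in>I. \<forall>t\<in>set ts. red_rep (eval ?P \<sigma> t) s = ?h t s}.
      (s \<in> {s\<in>I. rel (M s) r (map (\<lambda>c. red_rep c s) (map (eval ?P \<sigma>) ts))}) =
      (s \<in> {s\<in>I. rel (M s) r (map (eval (M s) (\<rho> s)) ts)})"
    proof
      fix s assume "s \<in> {s\<in>I. \<forall>t\<in>set ts. red_rep (eval ?P \<sigma> t) s = ?h t s}"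
      then have A: "\<forall>t\<in>set ts. red_rep (eval ?P \<sigma> t) s = ?h t s" by auto
      have "map (\<lambda>c. red_rep c s) (map (eval ?P \<sigma>) ts) = map (eval (M s) (\<rho> s)) ts"
        using A by (induction ts) auto
      then show "(s \<in> {s\<in>I. rel (M s) r (map (\<lambda>c. red_rep c s) (map (eval ?P \<sigma>) ts))}) =
      (s \<in> {s\<in>I. rel (M s) r (map (eval (M s) (\<rho> s)) ts)})" by (simp del: map_map)
    qed
  qed auto
  then show ?thesis using Rel by (simp add: rp_simps)
qed

lemma los_conj:
  assumes pf: "proper_filter I D" and tc: "theta_complete \<Theta> I D" and ok: "\<forall>s\<in>I. struc_ok (M s)"
    and rho: "\<forall>v. (\<lambda>s. \<rho> s v) \<in> Pi I (\<lambda>s. carrier (M s))"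
    and sig: "\<forall>v. \<sigma> v = red_class I D M (\<lambda>s. \<rho> s v)"
    and ac: "atomic_conj \<Theta> \<phi>"
  shows "sat \<phi> (reduced_product I D M) \<sigma> \<longleftrightarrow> {s\<in>I. sat \<phi> (M s) (\<rho> s)} \<in> D"
proof -
  obtain K h where phi: "\<phi> = Conj K h" and K: "|K| <o |\<Theta>|" and at: "\<forall>k\<in>K. \<exists>a. h k = Atom a"
    using ac unfolding atomic_conj_def by blast
  let ?P = "reduced_product I D M"
  have each: "sat (h k) ?P \<sigma> \<longleftrightarrow> {s\<in>I. sat (h k) (M s) (\<rho> s)} \<in> D" if "k \<in> K" for k
    using at that los_atm[OF pf ok rho sig] by auto
  show ?thesis
  proof
    assume "sat \<phi> ?P \<sigma>"
    then have H: "\<forall>k\<in>K. {s\<in>I. sat (h k) (M s) (\<rho> s)} \<in> D" using each phi by simp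
    let ?A = "(\<lambda>k. {s\<in>I. sat (h k) (M s) (\<rho> s)}) ` K"
    have c: "|?A| <o |\<Theta>|" by (rule ordLeq_ordLess_trans[OF card_of_image K])
    have s: "?A \<subseteq> D" using H by auto
    have "I \<inter> \<Inter>?A \<in> D" using tc s c unfolding theta_complete_def by (elim allE[of _ ?A]) simp
    moreover have "I \<inter> \<Inter>?A = {s\<in>I. sat \<phi> (M s) (\<rho> s)}" using phi by auto
    ultimately show "{s\<in>I. sat \<phi> (M s) (\<rho> s)} \<in> D" by simp
  next
    assume H: "{s\<in>I. sat \<phi> (M s) (\<rho> s)} \<in> D"
    have "{s\<in>I. sat (h k) (M s) (\<rho> s)} \<in> D" if "k \<in> K" for k
      by (rule pf_up[OF pf H]) (use phi that in auto)
    then show "sat \<phi> ?P \<sigma>" using each phi by simp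
  qed
qed



theorem claim3p6:
  fixes I :: "'i set" and D :: "'i set set" and Mu :: "'c set" and \<Theta> :: "'th set"
    and E :: "'v set" and T \<Delta> :: "('r, 'f, 'v, 'k) fm set"
  assumes "infinite \<Theta>"
    and "(cexp_lt_fixed Mu \<Theta> \<and> |E| <o |Mu| ) \<or> |E| <o |\<Theta>|"
    and "proper_filter I D" and "theta_complete \<Theta> I D" and "regular_filter Mu \<Theta> I D"
    and "is_theory \<Theta> T"
    and "\<forall>\<phi>\<in>\<Delta>. atomic_conj \<Theta> \<phi>"
  shows "moral_filter I D Mu \<Theta> E \<Delta> T TYPE('m)
     \<longleftrightarrow> (\<forall>M :: 'i \<Rightarrow> ('m, 'f, 'r) struc. (\<forall>s\<in>I. is_model (M s) T) \<longrightarrow>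
            saturated (cardSuc (card_of Mu)) \<Theta> E \<Delta> (reduced_product I D M))"
proof -
  have pf: "proper_filter I D" using assms(3) .
  have tc: "theta_complete \<Theta> I D" using assms(4) .
  have ac: "\<forall>\<phi>\<in>\<Delta>. atomic_conj \<Theta> \<phi>" using assms(7) .
  obtain w where w: "\<forall>s\<in>I. w s \<subseteq> Mu \<and> |w s| <o |\<Theta>|" and wD: "\<forall>\<alpha>\<in>Mu. {s\<in>I. \<alpha> \<in> w s} \<in> D"
    using assms(5) unfolding regular_filter_def by blast
  have single: "{\<alpha>} \<in> small_subsets Mu \<Theta>" if "\<alpha> \<in> Mu" for \<alpha>
    using that fin_less_inf[of "{\<alpha>}" \<Theta>] assms(1) by (simp add: small_subsets_def)
  have tcI: "I \<inter> (\<Inter>\<alpha>\<in>u. f \<alpha>) \<in> D" if "\<forall>\<alpha>\<in>u. f \<alpha> \<in> D" "|u| <o |\<Theta>|" for f and u :: "'c set"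
  proof -
    have c: "|f ` u| <o |\<Theta>|" by (rule ordLeq_ordLess_trans[OF card_of_image that(2)])
    have s: "f ` u \<subseteq> D" using that(1) by auto
    show ?thesis using tc s c unfolding theta_complete_def by (elim allE[of _ "f ` u"]) simp
  qed
  have wsmall: "w s \<in> small_subsets Mu \<Theta>" if "s \<in> I" for s
    using w that by (simp add: small_subsets_def)
  show ?thesis
  proof
    assume mor: "moral_filter I D Mu \<Theta> E \<Delta> T TYPE('m)"
    show "\<forall>M :: 'i \<Rightarrow> ('m, 'f, 'r) struc. (\<forall>s\<in>I. is_model (M s) T) \<longrightarrow>
            saturated (cardSuc (card_of Mu)) \<Theta> E \<Delta> (reduced_product I D M)"
    proof (intro allI impI)
      fix M :: "'i \<Rightarrow> ('m, 'f, 'r) struc"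
      assume mods: "\<forall>s\<in>I. is_model (M s) T"
      have ok: "\<forall>s\<in>I. struc_ok (M s)" using mods by (simp add: is_model_def)
      let ?P = "reduced_product I D M"
      show "saturated (cardSuc |Mu| ) \<Theta> E \<Delta> ?P"
        unfolding saturated_def
      proof (intro allI impI)
        fix p :: "(('r, 'f, 'v, 'k) fm \<times> ('v \<Rightarrow> ('i \<Rightarrow> 'm) set)) set"
        assume pc: "|p| <o cardSuc |Mu|"
          and pp: "\<forall>(\<phi>, c)\<in>p. \<phi> \<in> \<Delta> \<and> (\<forall>y. y \<notin> E \<longrightarrow> c y \<in> carrier ?P)"
          and sm: "\<forall>q. q \<subseteq> p \<longrightarrow> |q| <o |\<Theta>| \<longrightarrow> realized ?P E q"
        show "realized ?P E p"
        proof (cases "p = {}")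
          case True
          have "|{} :: (('r, 'f, 'v, 'k) fm \<times> ('v \<Rightarrow> ('i \<Rightarrow> 'm) set)) set| <o |\<Theta>|"
            by (rule fin_less_inf[OF _ assms(1)]) simp
          then show ?thesis using sm[rule_format, of p] True by simp
        next
          case False
          have "|p| \<le>o |Mu|"
            using pc cardSuc_ordLeq_ordLess[OF card_of_Card_order card_of_Card_order] by blast
          then have "\<exists>g. g ` Mu = p" using card_of_ordLeq2[OF False, of Mu] by simp
          then obtain e where e: "e ` Mu = p" by blast
          define \<phi> where "\<phi> = (\<lambda>\<alpha>. fst (e \<alpha>))"
          define c where "c = (\<lambda>\<alpha>. snd (e \<alpha>))"
          have ea: "(\<phi> \<alpha>, c \<alpha>) \<in> p" if "\<alpha> \<in> Mu" for \<alpha>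
            using e that by (auto simp: \<phi>_def c_def)
          have phiD: "\<phi> \<alpha> \<in> \<Delta>" if "\<alpha> \<in> Mu" for \<alpha>
            using bspec[OF pp ea[OF that]] by simp
          have cc: "c \<alpha> y \<in> carrier ?P" if "\<alpha> \<in> Mu" "y \<notin> E" for \<alpha> y
            using bspec[OF pp ea[OF that(1)]] that(2) by simp
          define \<tau> where "\<tau> = (\<lambda>s \<alpha> y. red_rep (c \<alpha> y) s)"
          define a where "a = (\<lambda>u. {s\<in>I. solvable (M s) E \<phi> (\<tau> s) u})"
          have prob: "moral_problem I D Mu \<Theta> E \<Delta> T a TYPE('m)"
            unfolding moral_problem_def
          proof (intro conjI)
            show "\<forall>u\<in>small_subsets Mu \<Theta>. a u \<in> D"
            proof
              fix u assume u: "u \<in> small_subsets Mu \<Theta>"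
              hence uM: "u \<subseteq> Mu" and uc: "|u| <o |\<Theta>|" by (auto simp: small_subsets_def)
              let ?q = "(\<lambda>\<alpha>. (\<phi> \<alpha>, c \<alpha>)) ` u"
              have "?q \<subseteq> p" using ea uM by auto
              moreover have "|?q| <o |\<Theta>|" by (rule ordLeq_ordLess_trans[OF card_of_image uc])
              ultimately have "realized ?P E ?q" using sm by blast
              then obtain g where g: "\<forall>x\<in>E. g x \<in> carrier ?P"
                and gs: "\<forall>(\<psi>, d)\<in>?q. sat \<psi> ?P (upd E g d)"
                unfolding realized_def by blast
              have S: "{s\<in>I. sat (\<phi> \<alpha>) (M s) (upd E (\<lambda>x. red_rep (g x) s) (\<tau> s \<alpha>))} \<in> D"
                if \<alpha>: "\<alpha> \<in> u" for \<alpha>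
              proof -
                have sa: "sat (\<phi> \<alpha>) ?P (upd E g (c \<alpha>))" using gs \<alpha> by auto
                let ?\<rho> = "\<lambda>s. upd E (\<lambda>x. red_rep (g x) s) (\<tau> s \<alpha>)"
                have rho: "\<forall>v. (\<lambda>s. ?\<rho> s v) \<in> Pi I (\<lambda>s. carrier (M s))"
                proof
                  fix v show "(\<lambda>s. ?\<rho> s v) \<in> Pi I (\<lambda>s. carrier (M s))"
                  proof (cases "v \<in> E")
                    case True thus ?thesis using rep_carrier(1)[OF pf, of "g v" M] g
                      by (simp add: upd_def)
                  next
                    case False thus ?thesis using rep_carrier(1)[OF pf, of "c \<alpha> v" M] cc \<alpha> uM
                      by (auto simp add: upd_def \<tau>_def)
                  qed
                qed
                have sig: "\<forall>v. upd E g (c \<alpha>) v = red_class I D M (\<lambda>s. ?\<rho> s v)"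
                proof
                  fix v show "upd E g (c \<alpha>) v = red_class I D M (\<lambda>s. ?\<rho> s v)"
                  proof (cases "v \<in> E")
                    case True thus ?thesis using rep_carrier(2)[OF pf, of "g v" M] g
                      by (simp add: upd_def)
                  next
                    case False thus ?thesis using rep_carrier(2)[OF pf, of "c \<alpha> v" M] cc \<alpha> uM
                      by (auto simp add: upd_def \<tau>_def)
                  qed
                qed
                have "sat (\<phi> \<alpha>) ?P (upd E g (c \<alpha>)) \<longleftrightarrow> {s\<in>I. sat (\<phi> \<alpha>) (M s) (?\<rho> s)} \<in> D"
                  by (rule los_conj[OF pf tc ok rho sig]) (use ac phiD \<alpha> uM in auto)
                thus ?thesis using sa by simp
              qed
              have X: "I \<inter> (\<Inter>\<alpha>\<in>u. {s\<in>I. sat (\<phi> \<alpha>) (M s) (upd E (\<lambda>x. red_rep (g x) s) (\<tau> s \<alpha>))}) \<in> D"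
                by (rule tcI[OF _ uc]) (use S in blast)
              have "I \<inter> (\<Inter>\<alpha>\<in>u. {s\<in>I. sat (\<phi> \<alpha>) (M s) (upd E (\<lambda>x. red_rep (g x) s) (\<tau> s \<alpha>))}) \<subseteq> a u"
              proof
                fix s assume s: "s \<in> I \<inter> (\<Inter>\<alpha>\<in>u. {s\<in>I. sat (\<phi> \<alpha>) (M s) (upd E (\<lambda>x. red_rep (g x) s) (\<tau> s \<alpha>))})"
                have "\<forall>x\<in>E. red_rep (g x) s \<in> carrier (M s)"
                proof
                  fix x assume "x \<in> E"
                  then show "red_rep (g x) s \<in> carrier (M s)"
                    using Pi_mem[OF rep_carrier(1)[OF pf, of "g x" M]] g s by blast
                qed
                moreover have "\<forall>\<alpha>\<in>u. sat (\<phi> \<alpha>) (M s) (upd E (\<lambda>x. red_rep (g x) s) (\<tau> s \<alpha>))"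
                  using s by simp
                ultimately have "solvable (M s) E \<phi> (\<tau> s) u" unfolding solvable_def
                  by (intro exI[of _ "\<lambda>x. red_rep (g x) s"] conjI)
                then show "s \<in> a u" using s unfolding a_def by simp
              qed
              moreover have "a u \<subseteq> I" by (auto simp: a_def)
              ultimately show "a u \<in> D" using pf_up[OF pf X] by blast
            qed
          next
            show "\<forall>u\<in>small_subsets Mu \<Theta>. \<forall>v\<in>small_subsets Mu \<Theta>. u \<subseteq> v \<longrightarrow> a v \<subseteq> a u"
              by (auto simp: a_def solvable_def)
          next
            show "a {} = I"
            proof -
              have "solvable (M s) E \<phi> (\<tau> s) {}" if s: "s \<in> I" for s
              proof -
                have "carrier (M s) \<noteq> {}" using ok s by (simp add: struc_ok_def)
                then have "\<forall>x\<in>E. (\<lambda>x. SOME y. y \<in> carrier (M s)) x \<in> carrier (M s)"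
                  by (simp add: some_in_eq)
                then show ?thesis unfolding solvable_def
                  by (intro exI[of _ "\<lambda>x. SOME y. y \<in> carrier (M s)"]) simp
              qed
              then show ?thesis by (auto simp: a_def)
            qed
          next
            show "\<exists>\<phi>'. (\<forall>\<alpha>\<in>Mu. \<phi>' \<alpha> \<in> \<Delta>) \<and>
              (\<forall>A u. A \<subseteq> I \<longrightarrow> A \<noteq> {} \<longrightarrow> u \<in> small_subsets Mu \<Theta> \<longrightarrow>
                (\<exists>(M' :: ('m, 'f, 'r) struc) b. is_model M' T \<and>
                   (\<forall>\<alpha>\<in>u. \<forall>y. y \<notin> E \<longrightarrow> b \<alpha> y \<in> carrier M') \<and>
                   (\<forall>v. v \<subseteq> u \<longrightarrow>
                      (A \<subseteq> a v \<longrightarrow> solvable M' E \<phi>' b v) \<and>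
                      (A \<subseteq> I - a v \<longrightarrow> \<not> solvable M' E \<phi>' b v))))"
            proof (intro exI[of _ \<phi>] conjI allI impI ballI)
              show "\<phi> \<alpha> \<in> \<Delta>" if "\<alpha> \<in> Mu" for \<alpha> using phiD that .
            next
              fix A u assume AI: "A \<subseteq> I" and An: "A \<noteq> {}" and u: "u \<in> small_subsets Mu \<Theta>"
              obtain s where sA: "s \<in> A" using An by blast
              have s: "s \<in> I" using sA AI by blast
              have uM: "u \<subseteq> Mu" using u by (simp add: small_subsets_def)
              show "\<exists>(M' :: ('m, 'f, 'r) struc) b. is_model M' T \<and>
                   (\<forall>\<alpha>\<in>u. \<forall>y. y \<notin> E \<longrightarrow> b \<alpha> y \<in> carrier M') \<and>
                   (\<forall>v. v \<subseteq> u \<longrightarrow>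
                      (A \<subseteq> a v \<longrightarrow> solvable M' E \<phi> b v) \<and>
                      (A \<subseteq> I - a v \<longrightarrow> \<not> solvable M' E \<phi> b v))"
              proof (intro exI[of _ "M s"] exI[of _ "\<tau> s"] conjI allI ballI impI)
                show "is_model (M s) T" using mods s by blast
              next
                fix \<alpha> y assume \<alpha>: "\<alpha> \<in> u" and y: "y \<notin> E"
                show "\<tau> s \<alpha> y \<in> carrier (M s)"
                  using rep_carrier(1)[OF pf cc[OF _ y]] \<alpha> uM s by (auto simp: \<tau>_def)
              next
                fix v assume "v \<subseteq> u" "A \<subseteq> a v"
                then show "solvable (M s) E \<phi> (\<tau> s) v" using sA by (auto simp: a_def)
              next
                fix v assume "v \<subseteq> u" "A \<subseteq> I - a v"
                then show "\<not> solvable (M s) E \<phi> (\<tau> s) v" using sA s by (auto simp: a_def)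
              qed
            qed
          qed
          obtain bb where sol: "moral_solution I D Mu \<Theta> a bb"
            using mor prob unfolding moral_filter_def by blast
          define us where "us = (\<lambda>s. {\<alpha> \<in> w s. s \<in> bb {\<alpha>}})"
          have us_small: "us s \<in> small_subsets Mu \<Theta>" if s: "s \<in> I" for s
          proof -
            have "us s \<subseteq> w s" by (auto simp: us_def)
            then have "|us s| \<le>o |w s|" by (rule card_of_mono1)
            then have "|us s| <o |\<Theta>|" using w s ordLeq_ordLess_trans by blast
            then show ?thesis using w s \<open>us s \<subseteq> w s\<close> by (auto simp: small_subsets_def)
          qed
          have solv: "solvable (M s) E \<phi> (\<tau> s) (us s)" if s: "s \<in> I" for s
          proof -
            have "bb (us s) = I \<inter> (\<Inter>\<alpha>\<in>us s. bb {\<alpha>})" and "bb (us s) \<subseteq> a (us s)"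
              using sol us_small[OF s] unfolding moral_solution_def by auto
            moreover have "s \<in> I \<inter> (\<Inter>\<alpha>\<in>us s. bb {\<alpha>})" using s by (auto simp: us_def)
            ultimately have "s \<in> a (us s)" by auto
            thus ?thesis by (simp add: a_def)
          qed
          define G where "G = (\<lambda>s. SOME g. (\<forall>x\<in>E. g x \<in> carrier (M s)) \<and>
              (\<forall>\<alpha>\<in>us s. sat (\<phi> \<alpha>) (M s) (upd E g (\<tau> s \<alpha>))))"
          have G: "(\<forall>x\<in>E. G s x \<in> carrier (M s)) \<and> (\<forall>\<alpha>\<in>us s. sat (\<phi> \<alpha>) (M s) (upd E (G s) (\<tau> s \<alpha>)))"
            if s: "s \<in> I" for s
          proof -
            have "\<exists>g. (\<forall>x\<in>E. g x \<in> carrier (M s)) \<and> (\<forall>\<alpha>\<in>us s. sat (\<phi> \<alpha>) (M s) (upd E g (\<tau> s \<alpha>)))"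
              using solv[OF s] unfolding solvable_def .
            then show ?thesis unfolding G_def by (rule someI_ex)
          qed
          define gg where "gg = (\<lambda>x. red_class I D M (\<lambda>s. G s x))"
          have GPi: "(\<lambda>s. G s x) \<in> Pi I (\<lambda>s. carrier (M s))" if "x \<in> E" for x
            using G that by auto
          show "realized ?P E p" unfolding realized_def
          proof (intro exI[of _ gg] conjI ballI)
            fix x assume "x \<in> E"
            then show "gg x \<in> carrier ?P" using GPi by (auto simp: gg_def rp_simps)
          next
            fix z assume "z \<in> p"
            then obtain \<alpha> where \<alpha>: "\<alpha> \<in> Mu" and z: "z = (\<phi> \<alpha>, c \<alpha>)"
              using e by (auto simp: \<phi>_def c_def)
            let ?\<rho> = "\<lambda>s. upd E (G s) (\<tau> s \<alpha>)"
            have rho: "\<forall>v. (\<lambda>s. ?\<rho> s v) \<in> Pi I (\<lambda>s. carrier (M s))"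
            proof
              fix v show "(\<lambda>s. ?\<rho> s v) \<in> Pi I (\<lambda>s. carrier (M s))"
              proof (cases "v \<in> E")
                case True thus ?thesis using GPi[OF True] by (simp add: upd_def)
              next
                case False thus ?thesis using rep_carrier(1)[OF pf cc[OF \<alpha> False]]
                  by (auto simp add: upd_def \<tau>_def)
              qed
            qed
            have sig: "\<forall>v. upd E gg (c \<alpha>) v = red_class I D M (\<lambda>s. ?\<rho> s v)"
            proof
              fix v show "upd E gg (c \<alpha>) v = red_class I D M (\<lambda>s. ?\<rho> s v)"
              proof (cases "v \<in> E")
                case True thus ?thesis by (simp add: upd_def gg_def)
              next
                case False thus ?thesis using rep_carrier(2)[OF pf cc[OF \<alpha> False]]
                  by (auto simp add: upd_def \<tau>_def)
              qed
            qed
            have L: "sat (\<phi> \<alpha>) ?P (upd E gg (c \<alpha>)) \<longleftrightarrow> {s\<in>I. sat (\<phi> \<alpha>) (M s) (?\<rho> s)} \<in> D"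
              by (rule los_conj[OF pf tc ok rho sig]) (use ac phiD \<alpha> in auto)
            have b1: "bb {\<alpha>} \<in> D" using sol single[OF \<alpha>] unfolding moral_solution_def by blast
            have "{s\<in>I. \<alpha> \<in> w s} \<inter> bb {\<alpha>} \<subseteq> {s\<in>I. sat (\<phi> \<alpha>) (M s) (?\<rho> s)}"
            proof
              fix s assume s: "s \<in> {s\<in>I. \<alpha> \<in> w s} \<inter> bb {\<alpha>}"
              then have "\<alpha> \<in> us s" by (auto simp: us_def)
              then show "s \<in> {s\<in>I. sat (\<phi> \<alpha>) (M s) (?\<rho> s)}" using G s by auto
            qed
            then have "{s\<in>I. sat (\<phi> \<alpha>) (M s) (?\<rho> s)} \<in> D"
              using pf_up[OF pf pf_int[OF pf bspec[OF wD \<alpha>] b1]] by blast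
            then have "sat (\<phi> \<alpha>) ?P (upd E gg (c \<alpha>))" using L by simp
            then show "case z of (\<psi>, d) \<Rightarrow> sat \<psi> ?P (upd E gg d)" using z by simp
          qed
        qed
      qed
    qed
  next
    assume satH: "\<forall>M :: 'i \<Rightarrow> ('m, 'f, 'r) struc. (\<forall>s\<in>I. is_model (M s) T) \<longrightarrow>
            saturated (cardSuc (card_of Mu)) \<Theta> E \<Delta> (reduced_product I D M)"
    show "moral_filter I D Mu \<Theta> E \<Delta> T TYPE('m)"
      unfolding moral_filter_def
    proof (intro allI impI)
      fix a assume prob: "moral_problem I D Mu \<Theta> E \<Delta> T a TYPE('m)"
      have aD: "\<forall>u\<in>small_subsets Mu \<Theta>. a u \<in> D" using prob unfolding moral_problem_def by blast
      obtain \<phi> where phiD: "\<forall>\<alpha>\<in>Mu. \<phi> \<alpha> \<in> \<Delta>" and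
        mp: "\<forall>A u. A \<subseteq> I \<longrightarrow> A \<noteq> {} \<longrightarrow> u \<in> small_subsets Mu \<Theta> \<longrightarrow>
           (\<exists>(M :: ('m, 'f, 'r) struc) b. is_model M T \<and>
              (\<forall>\<alpha>\<in>u. \<forall>y. y \<notin> E \<longrightarrow> b \<alpha> y \<in> carrier M) \<and>
              (\<forall>v. v \<subseteq> u \<longrightarrow>
                 (A \<subseteq> a v \<longrightarrow> solvable M E \<phi> b v) \<and>
                 (A \<subseteq> I - a v \<longrightarrow> \<not> solvable M E \<phi> b v)))"
        using prob unfolding moral_problem_def by blast
      define Q where "Q = (\<lambda>s (mb :: ('m, 'f, 'r) struc \<times> ('c \<Rightarrow> 'v \<Rightarrow> 'm)).
          is_model (fst mb) T \<and> (\<forall>\<alpha>\<in>w s. \<forall>y. y \<notin> E \<longrightarrow> snd mb \<alpha> y \<in> carrier (fst mb)) \<and>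
          (\<forall>v. v \<subseteq> w s \<longrightarrow> (s \<in> a v \<longrightarrow> solvable (fst mb) E \<phi> (snd mb) v) \<and>
              (s \<notin> a v \<longrightarrow> \<not> solvable (fst mb) E \<phi> (snd mb) v)))"
      define MB where "MB = (\<lambda>s. SOME mb. Q s mb)"
      define Ms where "Ms = (\<lambda>s. fst (MB s))"
      define B where "B = (\<lambda>s. snd (MB s))"
      have MBp: "is_model (Ms s) T \<and> (\<forall>\<alpha>\<in>w s. \<forall>y. y \<notin> E \<longrightarrow> B s \<alpha> y \<in> carrier (Ms s)) \<and>
          (\<forall>v. v \<subseteq> w s \<longrightarrow> (s \<in> a v \<longrightarrow> solvable (Ms s) E \<phi> (B s) v) \<and>
              (s \<notin> a v \<longrightarrow> \<not> solvable (Ms s) E \<phi> (B s) v))" if s: "s \<in> I" for s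
      proof -
        have s1: "{s} \<subseteq> I" and s2: "{s} \<noteq> {}" using s by auto
        from mp[rule_format, OF s1 s2 wsmall[OF s]] obtain M0 :: "('m, 'f, 'r) struc" and b0 where
          m0: "is_model M0 T" and b0: "\<forall>\<alpha>\<in>w s. \<forall>y. y \<notin> E \<longrightarrow> b0 \<alpha> y \<in> carrier M0"
          and v0: "\<forall>v. v \<subseteq> w s \<longrightarrow> ({s} \<subseteq> a v \<longrightarrow> solvable M0 E \<phi> b0 v) \<and>
                 ({s} \<subseteq> I - a v \<longrightarrow> \<not> solvable M0 E \<phi> b0 v)"
          by blast
        have "Q s (M0, b0)" unfolding Q_def using m0 b0 v0 s by auto
        then have "Q s (MB s)" unfolding MB_def by (rule someI)
        then show ?thesis unfolding Q_def Ms_def B_def .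
      qed
      have mods: "\<forall>s\<in>I. is_model (Ms s) T" using MBp by blast
      have ok: "\<forall>s\<in>I. struc_ok (Ms s)" using mods by (simp add: is_model_def)
      define arb where "arb = (\<lambda>s. SOME x. x \<in> carrier (Ms s))"
      have arb: "arb s \<in> carrier (Ms s)" if "s \<in> I" for s
        using ok that unfolding arb_def struc_ok_def by (simp add: some_in_eq)
      define Bp where "Bp = (\<lambda>s \<alpha> y. if \<alpha> \<in> w s then B s \<alpha> y else arb s)"
      let ?P = "reduced_product I D Ms"
      define c where "c = (\<lambda>\<alpha> y. red_class I D Ms (\<lambda>s. Bp s \<alpha> y))"
      have BpPi: "(\<lambda>s. Bp s \<alpha> y) \<in> Pi I (\<lambda>s. carrier (Ms s))" if "y \<notin> E" for \<alpha> y
        using MBp arb that by (auto simp: Bp_def)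
      have cc: "c \<alpha> y \<in> carrier ?P" if "y \<notin> E" for \<alpha> y
        using BpPi[OF that] by (auto simp: c_def rp_simps)
      define p where "p = (\<lambda>\<alpha>. (\<phi> \<alpha>, c \<alpha>)) ` Mu"
      have satP: "saturated (cardSuc |Mu| ) \<Theta> E \<Delta> ?P" using satH mods by blast
      have "|p| \<le>o |Mu|" unfolding p_def by (rule card_of_image)
      then have pc: "|p| <o cardSuc |Mu|"
        using cardSuc_ordLeq_ordLess[OF card_of_Card_order card_of_Card_order] by blast
      have pp: "\<forall>(\<psi>, d)\<in>p. \<psi> \<in> \<Delta> \<and> (\<forall>y. y \<notin> E \<longrightarrow> d y \<in> carrier ?P)"
        using phiD cc by (auto simp: p_def)
      have psm: "\<forall>q. q \<subseteq> p \<longrightarrow> |q| <o |\<Theta>| \<longrightarrow> realized ?P E q"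
      proof (intro allI impI)
        fix q assume qp: "q \<subseteq> p" and qc: "|q| <o |\<Theta>|"
        define ch where "ch = (\<lambda>z. SOME \<alpha>. \<alpha> \<in> Mu \<and> z = (\<phi> \<alpha>, c \<alpha>))"
        define u where "u = ch ` q"
        have chp: "ch z \<in> Mu \<and> z = (\<phi> (ch z), c (ch z))" if "z \<in> q" for z
        proof -
          have "\<exists>\<alpha>. \<alpha> \<in> Mu \<and> z = (\<phi> \<alpha>, c \<alpha>)" using qp that by (auto simp: p_def)
          then show ?thesis unfolding ch_def by (rule someI_ex)
        qed
        have uM: "u \<subseteq> Mu" using chp by (auto simp: u_def)
        have uc: "|u| <o |\<Theta>|" unfolding u_def by (rule ordLeq_ordLess_trans[OF card_of_image qc])
        have usm: "u \<in> small_subsets Mu \<Theta>" using uM uc by (simp add: small_subsets_def)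
        have R1: "I \<inter> (\<Inter>\<alpha>\<in>u. {s\<in>I. \<alpha> \<in> w s}) \<in> D" by (rule tcI[OF _ uc]) (use wD uM in blast)
        define S where "S = a u \<inter> (I \<inter> (\<Inter>\<alpha>\<in>u. {s\<in>I. \<alpha> \<in> w s}))"
        have SD: "S \<in> D" unfolding S_def using pf_int[OF pf _ R1] aD usm by blast
        have Ssolv: "solvable (Ms s) E \<phi> (B s) u" if s: "s \<in> S" for s
        proof -
          have sI: "s \<in> I" and "u \<subseteq> w s" and "s \<in> a u" using s by (auto simp: S_def)
          then show ?thesis using MBp[OF sI] by blast
        qed
        define G where "G = (\<lambda>s. SOME g. (\<forall>x\<in>E. g x \<in> carrier (Ms s)) \<and>
            (s \<in> S \<longrightarrow> (\<forall>\<alpha>\<in>u. sat (\<phi> \<alpha>) (Ms s) (upd E g (B s \<alpha>)))))"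
        have G: "(\<forall>x\<in>E. G s x \<in> carrier (Ms s)) \<and>
            (s \<in> S \<longrightarrow> (\<forall>\<alpha>\<in>u. sat (\<phi> \<alpha>) (Ms s) (upd E (G s) (B s \<alpha>))))" if s: "s \<in> I" for s
        proof -
          have "\<exists>g. (\<forall>x\<in>E. g x \<in> carrier (Ms s)) \<and>
              (s \<in> S \<longrightarrow> (\<forall>\<alpha>\<in>u. sat (\<phi> \<alpha>) (Ms s) (upd E g (B s \<alpha>))))"
          proof (cases "s \<in> S")
            case True then show ?thesis using Ssolv[OF True] unfolding solvable_def by blast
          next
            case False then show ?thesis using arb[OF s] by (intro exI[of _ "\<lambda>x. arb s"]) auto
          qed
          then show ?thesis unfolding G_def by (rule someI_ex)
        qed
        define gg where "gg = (\<lambda>x. red_class I D Ms (\<lambda>s. G s x))"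
        have GPi: "(\<lambda>s. G s x) \<in> Pi I (\<lambda>s. carrier (Ms s))" if "x \<in> E" for x
          using G that by auto
        show "realized ?P E q" unfolding realized_def
        proof (intro exI[of _ gg] conjI ballI)
          fix x assume "x \<in> E"
          then show "gg x \<in> carrier ?P" using GPi by (auto simp: gg_def rp_simps)
        next
          fix z assume zq: "z \<in> q"
          define \<alpha> where "\<alpha> = ch z"
          have \<alpha>u: "\<alpha> \<in> u" using zq by (auto simp: u_def \<alpha>_def)
          have z: "z = (\<phi> \<alpha>, c \<alpha>)" and \<alpha>: "\<alpha> \<in> Mu" using chp[OF zq] by (auto simp: \<alpha>_def)
          let ?\<rho> = "\<lambda>s. upd E (G s) (Bp s \<alpha>)"
          have rho: "\<forall>v. (\<lambda>s. ?\<rho> s v) \<in> Pi I (\<lambda>s. carrier (Ms s))"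
          proof
            fix v show "(\<lambda>s. ?\<rho> s v) \<in> Pi I (\<lambda>s. carrier (Ms s))"
            proof (cases "v \<in> E")
              case True thus ?thesis using GPi[OF True] by (simp add: upd_def)
            next
              case False thus ?thesis using BpPi[OF False] by (simp add: upd_def)
            qed
          qed
          have sig: "\<forall>v. upd E gg (c \<alpha>) v = red_class I D Ms (\<lambda>s. ?\<rho> s v)"
            by (simp add: upd_def gg_def c_def)
          have L: "sat (\<phi> \<alpha>) ?P (upd E gg (c \<alpha>)) \<longleftrightarrow> {s\<in>I. sat (\<phi> \<alpha>) (Ms s) (?\<rho> s)} \<in> D"
            by (rule los_conj[OF pf tc ok rho sig]) (use ac phiD \<alpha> in auto)
          have "S \<subseteq> {s\<in>I. sat (\<phi> \<alpha>) (Ms s) (?\<rho> s)}"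
          proof
            fix s assume s: "s \<in> S"
            then have sI: "s \<in> I" and aw: "\<alpha> \<in> w s" using \<alpha>u by (auto simp: S_def)
            have "Bp s \<alpha> = B s \<alpha>" using aw by (simp add: Bp_def fun_eq_iff)
            then show "s \<in> {s\<in>I. sat (\<phi> \<alpha>) (Ms s) (?\<rho> s)}" using G[OF sI] s \<alpha>u sI by auto
          qed
          then have "{s\<in>I. sat (\<phi> \<alpha>) (Ms s) (?\<rho> s)} \<in> D" using pf_up[OF pf SD] by blast
          then have "sat (\<phi> \<alpha>) ?P (upd E gg (c \<alpha>))" using L by simp
          then show "case z of (\<psi>, d) \<Rightarrow> sat \<psi> ?P (upd E gg d)" using z by simp
        qed
      qed
      have "realized ?P E p" using satP pc pp psm unfolding saturated_def by blast
      then obtain g where g: "\<forall>x\<in>E. g x \<in> carrier ?P"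
        and gs: "\<forall>(\<psi>, d)\<in>p. sat \<psi> ?P (upd E g d)" unfolding realized_def by blast
      define Bs where "Bs = (\<lambda>\<alpha>. {s\<in>I. \<alpha> \<in> w s \<and> sat (\<phi> \<alpha>) (Ms s) (upd E (\<lambda>x. red_rep (g x) s) (B s \<alpha>))})"
      have BsD: "Bs \<alpha> \<in> D" if \<alpha>: "\<alpha> \<in> Mu" for \<alpha>
      proof -
        have sa: "sat (\<phi> \<alpha>) ?P (upd E g (c \<alpha>))" using gs \<alpha> by (auto simp: p_def)
        let ?\<rho> = "\<lambda>s. upd E (\<lambda>x. red_rep (g x) s) (Bp s \<alpha>)"
        have rho: "\<forall>v. (\<lambda>s. ?\<rho> s v) \<in> Pi I (\<lambda>s. carrier (Ms s))"
        proof
          fix v show "(\<lambda>s. ?\<rho> s v) \<in> Pi I (\<lambda>s. carrier (Ms s))"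
          proof (cases "v \<in> E")
            case True thus ?thesis using rep_carrier(1)[OF pf, of "g v" Ms] g by (simp add: upd_def)
          next
            case False thus ?thesis using BpPi[OF False] by (simp add: upd_def)
          qed
        qed
        have sig: "\<forall>v. upd E g (c \<alpha>) v = red_class I D Ms (\<lambda>s. ?\<rho> s v)"
        proof
          fix v show "upd E g (c \<alpha>) v = red_class I D Ms (\<lambda>s. ?\<rho> s v)"
          proof (cases "v \<in> E")
            case True thus ?thesis using rep_carrier(2)[OF pf, of "g v" Ms] g by (simp add: upd_def)
          next
            case False thus ?thesis by (simp add: upd_def c_def)
          qed
        qed
        have "sat (\<phi> \<alpha>) ?P (upd E g (c \<alpha>)) \<longleftrightarrow> {s\<in>I. sat (\<phi> \<alpha>) (Ms s) (?\<rho> s)} \<in> D"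
          by (rule los_conj[OF pf tc ok rho sig]) (use ac phiD \<alpha> in auto)
        then have X: "{s\<in>I. sat (\<phi> \<alpha>) (Ms s) (?\<rho> s)} \<in> D" using sa by simp
        have "{s\<in>I. sat (\<phi> \<alpha>) (Ms s) (?\<rho> s)} \<inter> {s\<in>I. \<alpha> \<in> w s} \<subseteq> Bs \<alpha>"
        proof
          fix s assume s: "s \<in> {s\<in>I. sat (\<phi> \<alpha>) (Ms s) (?\<rho> s)} \<inter> {s\<in>I. \<alpha> \<in> w s}"
          then have "Bp s \<alpha> = B s \<alpha>" by (simp add: Bp_def fun_eq_iff)
          then show "s \<in> Bs \<alpha>" using s by (auto simp: Bs_def)
        qed
        moreover have "Bs \<alpha> \<subseteq> I" by (auto simp: Bs_def)
        ultimately show ?thesis using pf_up[OF pf pf_int[OF pf X bspec[OF wD \<alpha>]]] by blast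
      qed
      define bb where "bb = (\<lambda>u. I \<inter> (\<Inter>\<alpha>\<in>u. Bs \<alpha>))"
      show "\<exists>b. moral_solution I D Mu \<Theta> a b"
      proof (intro exI[of _ bb])
        have "bb u \<in> D \<and> bb u \<subseteq> a u \<and> bb u = I \<inter> (\<Inter>\<alpha>\<in>u. bb {\<alpha>})"
          if u: "u \<in> small_subsets Mu \<Theta>" for u
        proof (intro conjI)
          have uM: "u \<subseteq> Mu" and uc: "|u| <o |\<Theta>|" using u by (auto simp: small_subsets_def)
          show "bb u \<in> D" unfolding bb_def by (rule tcI[OF _ uc]) (use BsD uM in blast)
          show "bb u \<subseteq> a u"
          proof
            fix s assume s: "s \<in> bb u"
            then have sI: "s \<in> I" and sB: "\<forall>\<alpha>\<in>u. s \<in> Bs \<alpha>" by (auto simp: bb_def)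
            have uw: "u \<subseteq> w s" using sB by (auto simp: Bs_def)
            have "\<forall>x\<in>E. red_rep (g x) s \<in> carrier (Ms s)"
            proof
              fix x assume "x \<in> E"
              then show "red_rep (g x) s \<in> carrier (Ms s)"
                using Pi_mem[OF rep_carrier(1)[OF pf, of "g x" Ms]] g sI by blast
            qed
            moreover have "\<forall>\<alpha>\<in>u. sat (\<phi> \<alpha>) (Ms s) (upd E (\<lambda>x. red_rep (g x) s) (B s \<alpha>))"
              using sB by (auto simp: Bs_def)
            ultimately have "solvable (Ms s) E \<phi> (B s) u" unfolding solvable_def by (intro exI[of _ "\<lambda>x. red_rep (g x) s"] conjI)
            then show "s \<in> a u" using MBp[OF sI] uw by blast
          qed
          show "bb u = I \<inter> (\<Inter>\<alpha>\<in>u. bb {\<alpha>})" by (auto simp: bb_def)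
        qed
        moreover have "bb {} = I" by (simp add: bb_def)
        ultimately show "moral_solution I D Mu \<Theta> a bb" unfolding moral_solution_def by blast
      qed
    qed
  qed
qed


end
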